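(* Let $\mathfrak{M}$ be a variety of associative rings such that for all finite rings $R,S\in\mathfrak{M}$, $\Gamma(R)\cong\Gamma(S)$ implies $R\cong S$. Then $T(\mathfrak{M})$ contains a polynomial of the form $mx$, where $m=q_1^{\beta_1}q_2^{\beta_2}\cdots q_t^{\beta_t}$ with $q_1,\ldots,q_t$ pairwise distinct prime numbers and $\beta_i\leq 3$ for all $i\leq t$.
   Context: All rings are associative, not necessarily commutative and not necessarily with identity. For a ring $R$, the zero-divisor graph $\Gamma(R)$ is the graph whose vertices are all nonzero (one-sided or two-sided) zero-divisors of $R$, two distinct vertices $x,y$ being adjacent iff $xy=0$ or $yx=0$. For a variety $\mathfrak{M}$, $T(\mathfrak{M})$ denotes the T-ideal (in the free associative ring $\mathbb{Z}\langle x_1,x_2,\ldots\rangle$) of all polynomial identities satisfied by all rings of $\mathfrak{M}$. *)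

theory Defs
  imports Main "HOL-Computational_Algebra.Primes"
begin

record 'a rg =
  rcar  :: "'a set"
  radd  :: "'a \<Rightarrow> 'a \<Rightarrow> 'a"
  rmul  :: "'a \<Rightarrow> 'a \<Rightarrow> 'a"
  rneg  :: "'a \<Rightarrow> 'a"
  rzero :: "'a"

definition is_rng :: "('a, 'b) rg_scheme \<Rightarrow> bool" where
  "is_rng R \<longleftrightarrow>
     rzero R \<in> rcar R \<and>
     (\<forall>x\<in>rcar R. \<forall>y\<in>rcar R. radd R x y \<in> rcar R \<and> rmul R x y \<in> rcar R) \<and>
     (\<forall>x\<in>rcar R. rneg R x \<in> rcar R) \<and>
     (\<forall>x\<in>rcar R. \<forall>y\<in>rcar R. \<forall>z\<in>rcar R.
        radd R (radd R x y) z = radd R x (radd R y z) \<and>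
        rmul R (rmul R x y) z = rmul R x (rmul R y z) \<and>
        rmul R x (radd R y z) = radd R (rmul R x y) (rmul R x z) \<and>
        rmul R (radd R x y) z = radd R (rmul R x z) (rmul R y z)) \<and>
     (\<forall>x\<in>rcar R. \<forall>y\<in>rcar R. radd R x y = radd R y x) \<and>
     (\<forall>x\<in>rcar R. radd R x (rzero R) = x \<and> radd R x (rneg R x) = rzero R)"

definition rng_iso :: "('a, 'c) rg_scheme \<Rightarrow> ('b, 'd) rg_scheme \<Rightarrow> bool" where
  "rng_iso R S \<longleftrightarrow> (\<exists>f. bij_betw f (rcar R) (rcar S) \<and>
      (\<forall>x\<in>rcar R. \<forall>y\<in>rcar R. f (radd R x y) = radd S (f x) (f y) \<and>
                              f (rmul R x y) = rmul S (f x) (f y)))"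

definition zd_vertices :: "('a, 'c) rg_scheme \<Rightarrow> 'a set" where
  "zd_vertices R = {x \<in> rcar R. x \<noteq> rzero R \<and>
      (\<exists>y\<in>rcar R. y \<noteq> rzero R \<and> (rmul R x y = rzero R \<or> rmul R y x = rzero R))}"

definition zd_adj :: "('a, 'c) rg_scheme \<Rightarrow> 'a \<Rightarrow> 'a \<Rightarrow> bool" where
  "zd_adj R x y \<longleftrightarrow> x \<in> zd_vertices R \<and> y \<in> zd_vertices R \<and> x \<noteq> y \<and>
      (rmul R x y = rzero R \<or> rmul R y x = rzero R)"

definition zd_graph_iso :: "('a, 'c) rg_scheme \<Rightarrow> ('b, 'd) rg_scheme \<Rightarrow> bool" where
  "zd_graph_iso R S \<longleftrightarrow> (\<exists>f. bij_betw f (zd_vertices R) (zd_vertices S) \<and>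
      (\<forall>x\<in>zd_vertices R. \<forall>y\<in>zd_vertices R. zd_adj R x y \<longleftrightarrow> zd_adj S (f x) (f y)))"

(* Elements of the free associative ring Z<x_1,x_2,...> (without constant term),
   represented by terms *)
datatype rterm = Var nat | Zero | Add rterm rterm | Neg rterm | Mul rterm rterm

primrec eval :: "('a, 'c) rg_scheme \<Rightarrow> (nat \<Rightarrow> 'a) \<Rightarrow> rterm \<Rightarrow> 'a" where
  "eval R \<rho> (Var i) = \<rho> i"
| "eval R \<rho> Zero = rzero R"
| "eval R \<rho> (Add s t) = radd R (eval R \<rho> s) (eval R \<rho> t)"
| "eval R \<rho> (Neg s) = rneg R (eval R \<rho> s)"
| "eval R \<rho> (Mul s t) = rmul R (eval R \<rho> s) (eval R \<rho> t)"

definition satisfies :: "('a, 'c) rg_scheme \<Rightarrow> rterm \<Rightarrow> bool" where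
  "satisfies R p \<longleftrightarrow> (\<forall>\<rho>. (\<forall>i. \<rho> i \<in> rcar R) \<longrightarrow> eval R \<rho> p = rzero R)"

(* The variety defined by a set of identities Sigma, represented by its members with
   carrier contained in nat (every countable ring is isomorphic to one of them). *)
definition variety :: "rterm set \<Rightarrow> nat rg set" where
  "variety \<Sigma> = {R. is_rng R \<and> (\<forall>p\<in>\<Sigma>. satisfies R p)}"

(* T(M): all identities satisfied by all rings of M (countable rings suffice, since an
   identity fails in a ring iff it fails in some finitely generated subring). *)
definition T_ideal :: "nat rg set \<Rightarrow> rterm set" where
  "T_ideal M = {p. \<forall>R\<in>M. satisfies R p}"

primrec smul_term :: "nat \<Rightarrow> rterm \<Rightarrow> rterm" where
  "smul_term 0 t = Zero"
| "smul_term (Suc n) t = Add t (smul_term n t)"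

end

theory Submission imports Defs "HOL-Library.Nat_Bijection" begin

primrec zm :: "('a,'b) rg_scheme \<Rightarrow> nat \<Rightarrow> 'a \<Rightarrow> 'a" where
  "zm R 0 x = rzero R"
| "zm R (Suc k) x = radd R x (zm R k x)"

lemma eval_smul: "eval R \<rho> (smul_term m t) = zm R m (eval R \<rho> t)"
  by (induction m) auto

locale rg0 = fixes R :: "('a,'b) rg_scheme" assumes isr: "is_rng R"
begin

lemma zero_cl[simp]: "rzero R \<in> rcar R" using isr unfolding is_rng_def by blast
lemma add_cl[simp]: "x \<in> rcar R \<Longrightarrow> y \<in> rcar R \<Longrightarrow> radd R x y \<in> rcar R" using isr unfolding is_rng_def by blast
lemma mul_cl[simp]: "x \<in> rcar R \<Longrightarrow> y \<in> rcar R \<Longrightarrow> rmul R x y \<in> rcar R" using isr unfolding is_rng_def by blast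
lemma neg_cl[simp]: "x \<in> rcar R \<Longrightarrow> rneg R x \<in> rcar R" using isr unfolding is_rng_def by blast
lemma add_assoc: "x \<in> rcar R \<Longrightarrow> y \<in> rcar R \<Longrightarrow> z \<in> rcar R \<Longrightarrow> radd R (radd R x y) z = radd R x (radd R y z)" using isr unfolding is_rng_def by blast
lemma mul_assoc: "x \<in> rcar R \<Longrightarrow> y \<in> rcar R \<Longrightarrow> z \<in> rcar R \<Longrightarrow> rmul R (rmul R x y) z = rmul R x (rmul R y z)" using isr unfolding is_rng_def by blast
lemma distl: "x \<in> rcar R \<Longrightarrow> y \<in> rcar R \<Longrightarrow> z \<in> rcar R \<Longrightarrow> rmul R x (radd R y z) = radd R (rmul R x y) (rmul R x z)" using isr unfolding is_rng_def by blast
lemma distr: "x \<in> rcar R \<Longrightarrow> y \<in> rcar R \<Longrightarrow> z \<in> rcar R \<Longrightarrow> rmul R (radd R x y) z = radd R (rmul R x z) (rmul R y z)" using isr unfolding is_rng_def by blast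
lemma add_comm: "x \<in> rcar R \<Longrightarrow> y \<in> rcar R \<Longrightarrow> radd R x y = radd R y x" using isr unfolding is_rng_def by blast
lemma add_zero[simp]: "x \<in> rcar R \<Longrightarrow> radd R x (rzero R) = x" using isr unfolding is_rng_def by blast
lemma add_neg[simp]: "x \<in> rcar R \<Longrightarrow> radd R x (rneg R x) = rzero R" using isr unfolding is_rng_def by blast
lemma zero_add[simp]: "x \<in> rcar R \<Longrightarrow> radd R (rzero R) x = x" by (metis add_comm add_zero zero_cl)
lemma neg_add[simp]: "x \<in> rcar R \<Longrightarrow> radd R (rneg R x) x = rzero R" by (metis add_comm add_neg neg_cl)

lemma add_cancel:
  assumes "x \<in> rcar R" "y \<in> rcar R" "z \<in> rcar R" "radd R x y = radd R x z" shows "y = z"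
proof -
  have "y = radd R (radd R (rneg R x) x) y" using assms by simp
  also have "\<dots> = radd R (rneg R x) (radd R x y)" using assms(1,2) by (intro add_assoc) auto
  also have "\<dots> = radd R (rneg R x) (radd R x z)" using assms by simp
  also have "\<dots> = z" using assms by (simp flip: add_assoc)
  finally show ?thesis .
qed

lemma neg_unique: "x \<in> rcar R \<Longrightarrow> y \<in> rcar R \<Longrightarrow> radd R x y = rzero R \<Longrightarrow> y = rneg R x"
  by (metis add_cancel add_neg neg_cl)

lemma zero_unique: "x \<in> rcar R \<Longrightarrow> y \<in> rcar R \<Longrightarrow> radd R x y = x \<Longrightarrow> y = rzero R"
  by (metis add_cancel add_zero zero_cl)

lemma mul_zero_r[simp]: "x \<in> rcar R \<Longrightarrow> rmul R x (rzero R) = rzero R"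
  by (metis distl zero_add zero_cl mul_cl zero_unique)
lemma mul_zero_l[simp]: "x \<in> rcar R \<Longrightarrow> rmul R (rzero R) x = rzero R"
  by (metis distr zero_add zero_cl mul_cl zero_unique)

lemma neg_zero[simp]: "rneg R (rzero R) = rzero R"
  by (metis neg_unique zero_cl add_zero)

lemma neg_distrib: "x \<in> rcar R \<Longrightarrow> y \<in> rcar R \<Longrightarrow> rneg R (radd R x y) = radd R (rneg R x) (rneg R y)"
proof -
  assume a: "x \<in> rcar R" "y \<in> rcar R"
  have "radd R (radd R x y) (radd R (rneg R x) (rneg R y)) = rzero R"
  proof -
    have "radd R (radd R x y) (radd R (rneg R x) (rneg R y)) = radd R x (radd R y (radd R (rneg R y) (rneg R x)))"
      using a by (simp add: add_assoc add_comm[of "rneg R x"])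
    also have "\<dots> = rzero R" using a by (simp flip: add_assoc)
    finally show ?thesis .
  qed
  thus ?thesis using a by (metis neg_unique add_cl neg_cl)
qed

lemma ac4: "a \<in> rcar R \<Longrightarrow> b \<in> rcar R \<Longrightarrow> c \<in> rcar R \<Longrightarrow> d \<in> rcar R \<Longrightarrow>
  radd R (radd R a b) (radd R c d) = radd R (radd R a c) (radd R b d)"
  by (metis add_assoc add_cl add_comm)

lemma zm_cl[simp]: "x \<in> rcar R \<Longrightarrow> zm R k x \<in> rcar R" by (induction k) auto

lemma zm_one[simp]: "x \<in> rcar R \<Longrightarrow> zm R (Suc 0) x = x" by simp

lemma zm_add: "x \<in> rcar R \<Longrightarrow> zm R (k + l) x = radd R (zm R k x) (zm R l x)"
  by (induction k) (auto simp: add_assoc)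

lemma zm_mult: "x \<in> rcar R \<Longrightarrow> zm R (k * l) x = zm R k (zm R l x)"
  by (induction k) (auto simp: zm_add)

lemma zm_zero[simp]: "zm R k (rzero R) = rzero R" by (induction k) auto

lemma zm_distrib: "x \<in> rcar R \<Longrightarrow> y \<in> rcar R \<Longrightarrow> zm R k (radd R x y) = radd R (zm R k x) (zm R k y)"
  by (induction k) (auto simp: ac4)

lemma zm_neg: "x \<in> rcar R \<Longrightarrow> zm R k (rneg R x) = rneg R (zm R k x)"
  by (metis neg_unique zm_distrib add_neg zm_zero neg_cl zm_cl)

lemma zm_mul_l: "x \<in> rcar R \<Longrightarrow> y \<in> rcar R \<Longrightarrow> rmul R (zm R k x) y = zm R k (rmul R x y)"
  by (induction k) (auto simp: distr)
lemma zm_mul_r: "x \<in> rcar R \<Longrightarrow> y \<in> rcar R \<Longrightarrow> rmul R x (zm R k y) = zm R k (rmul R x y)"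
  by (induction k) (auto simp: distl)


lemma neg_neg[simp]: "x \<in> rcar R \<Longrightarrow> rneg R (rneg R x) = x"
  by (metis neg_unique neg_add neg_cl)

end

primrec lsum :: "('a,'b) rg_scheme \<Rightarrow> 'a list \<Rightarrow> 'a" where
  "lsum R [] = rzero R"
| "lsum R (x # xs) = radd R x (lsum R xs)"

definition Qv :: "('a,'b) rg_scheme \<Rightarrow> (nat \<times> 'a) list \<Rightarrow> nat \<Rightarrow> 'a" where
  "Qv R L t = lsum R (map (\<lambda>(d,e). zm R (t^d) e) L)"

definition linL :: "('a,'b) rg_scheme \<Rightarrow> (nat \<times> 'a) list \<Rightarrow> 'a" where
  "linL R L = lsum R (map snd (filter (\<lambda>(d,e). d = 1) L))"

definition NN :: "nat \<Rightarrow> nat" where "NN D = (\<Prod>k\<in>{2..D}. 2^k - 2)"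

definition Lp :: "('a,'b) rg_scheme \<Rightarrow> nat \<Rightarrow> (nat \<times> 'a) list \<Rightarrow> (nat \<times> 'a) list" where
  "Lp R E L = map (\<lambda>(d,e). (d, zm R (2^E - 2^d) e)) (filter (\<lambda>(d,e). d < E) L)"

lemma NN_pos: "NN D > 0"
proof -
  have "\<forall>k\<in>{2..D}. (2::nat)^k - 2 > 0"
  proof
    fix k assume "k \<in> {2..D}"
    hence "(2::nat)^2 \<le> 2^k" by (intro power_increasing) auto
    thus "(2::nat)^k - 2 > 0" by simp
  qed
  thus ?thesis unfolding NN_def by (simp add: prod_pos)
qed

lemma NN_Suc: "D \<ge> 1 \<Longrightarrow> NN (Suc D) = NN D * (2^Suc D - 2)"
proof -
  assume "D \<ge> 1"
  hence "{2..Suc D} = insert (Suc D) {2..D}" by auto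
  thus ?thesis unfolding NN_def by (simp add: mult.commute)
qed

context rg0 begin

lemma lsum_cl[simp]: "set xs \<subseteq> rcar R \<Longrightarrow> lsum R xs \<in> rcar R"
  by (induction xs) auto

lemma lsum_append: "set xs \<subseteq> rcar R \<Longrightarrow> set ys \<subseteq> rcar R \<Longrightarrow>
   lsum R (xs @ ys) = radd R (lsum R xs) (lsum R ys)"
  by (induction xs) (auto simp: add_assoc)

lemma filt_cl[simp]: "snd ` set L \<subseteq> rcar R \<Longrightarrow> set (map snd (filter P L)) \<subseteq> rcar R"
  by auto

lemma lsum_filt_cl[simp]: "snd ` set L \<subseteq> rcar R \<Longrightarrow> lsum R (map snd (filter P L)) \<in> rcar R"
  by (rule lsum_cl) auto

lemma Qv_cl[simp]: "snd ` set L \<subseteq> rcar R \<Longrightarrow> Qv R L t \<in> rcar R"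
  unfolding Qv_def by (induction L) auto

lemma linL_cl[simp]: "snd ` set L \<subseteq> rcar R \<Longrightarrow> linL R L \<in> rcar R"
  unfolding linL_def by (induction L) auto

lemma Qv_Nil[simp]: "Qv R [] t = rzero R" by (simp add: Qv_def)
lemma Qv_Cons: "Qv R ((d,e)#L) t = radd R (zm R (t^d) e) (Qv R L t)" by (simp add: Qv_def)

lemma Qv_append: "snd ` set L1 \<subseteq> rcar R \<Longrightarrow> snd ` set L2 \<subseteq> rcar R \<Longrightarrow>
   Qv R (L1 @ L2) t = radd R (Qv R L1 t) (Qv R L2 t)"
  by (induction L1) (auto simp: Qv_Cons add_assoc)

lemma linL_append: "snd ` set L1 \<subseteq> rcar R \<Longrightarrow> snd ` set L2 \<subseteq> rcar R \<Longrightarrow>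
   linL R (L1 @ L2) = radd R (linL R L1) (linL R L2)"
  unfolding linL_def by (simp, rule lsum_append) auto

lemma step_id:
  assumes "\<forall>(d,e)\<in>set L. d \<le> E \<and> e \<in> rcar R"
  shows "zm R (2^E) (Qv R L t) = radd R (Qv R (Lp R E L) t) (Qv R L (2*t))"
  using assms
proof (induction L)
  case Nil thus ?case by (simp add: Lp_def)
next
  case (Cons x L)
  obtain d e where x: "x = (d,e)" by (cases x)
  have d: "d \<le> E" and e: "e \<in> rcar R" using Cons.prems x by auto
  have Lc: "snd ` set L \<subseteq> rcar R" using Cons.prems by auto
  have LpC: "snd ` set (Lp R E L) \<subseteq> rcar R" using Lc unfolding Lp_def by auto
  have IH: "zm R (2^E) (Qv R L t) = radd R (Qv R (Lp R E L) t) (Qv R L (2*t))" using Cons by auto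
  have "zm R (2^E) (Qv R (x#L) t) = radd R (zm R (2^E) (zm R (t^d) e)) (zm R (2^E) (Qv R L t))"
    using e Lc by (simp add: x Qv_Cons zm_distrib)
  also have "zm R (2^E) (zm R (t^d) e) = zm R (2^E * t^d) e" using e by (simp add: zm_mult)
  finally have L1: "zm R (2^E) (Qv R (x#L) t) = radd R (zm R (2^E * t^d) e) (radd R (Qv R (Lp R E L) t) (Qv R L (2*t)))"
    using IH by simp
  show ?case
  proof (cases "d < E")
    case True
    have hLp: "Lp R E ((d,e)#L) = (d, zm R (2^E - 2^d) e) # Lp R E L" using True by (simp add: Lp_def)
    have pw: "(2::nat)^d \<le> 2^E" using d by (simp add: power_increasing)
    have sp: "2^E * t^d = t^d * (2^E - 2^d) + (2*t)^d"
      using pw by (simp add: power_mult_distrib algebra_simps diff_mult_distrib)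
    have "zm R (2^E * t^d) e = radd R (zm R (t^d) (zm R (2^E - 2^d) e)) (zm R ((2*t)^d) e)"
      using e by (simp add: sp zm_add zm_mult)
    thus ?thesis using L1 e Lc LpC by (simp add: hLp x Qv_Cons ac4)
  next
    case False
    hence dE: "d = E" using d by simp
    have hLp: "Lp R E ((d,e)#L) = Lp R E L" using False by (simp add: Lp_def)
    have "zm R (2^E * t^d) e = zm R ((2*t)^d) e" using dE by (simp add: power_mult_distrib)
    thus ?thesis using L1 e Lc LpC
      by (simp add: hLp x Qv_Cons flip: add_assoc) (metis add_comm zm_cl Qv_cl)
  qed
qed

lemma linL_Lp:
  assumes "snd ` set L \<subseteq> rcar R" "E \<ge> 2"
  shows "linL R (Lp R E L) = zm R (2^E - 2) (linL R L)"
  using assms unfolding linL_def Lp_def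
  by (induction L) (auto simp: zm_distrib split: prod.splits)

lemma elim:
  assumes "\<forall>(d,e)\<in>set L. 1 \<le> d \<and> d \<le> D \<and> e \<in> rcar R" "\<forall>t. Qv R L t = rzero R"
  shows "zm R (NN D) (linL R L) = rzero R"
  using assms
proof (induction D arbitrary: L)
  case 0
  hence "L = []" by (cases L) auto
  thus ?case by (simp add: linL_def)
next
  case (Suc D)
  show ?case
  proof (cases "D = 0")
    case True
    hence all1: "\<forall>(d,e)\<in>set L. d = 1 \<and> e \<in> rcar R" using Suc.prems by auto
    have "Qv R L 1 = linL R L" using all1 unfolding Qv_def linL_def
      by (induction L) auto
    hence "linL R L = rzero R" using Suc.prems by simp
    moreover have "NN (Suc D) = 1" using True by (simp add: NN_def)
    ultimately show ?thesis by simp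
  next
    case False
    let ?L = "Lp R (Suc D) L"
    have Lc: "snd ` set L \<subseteq> rcar R" using Suc.prems by auto
    have LpC: "snd ` set ?L \<subseteq> rcar R" using Lc unfolding Lp_def by auto
    have q: "\<forall>t. Qv R ?L t = rzero R"
    proof
      fix t
      have "zm R (2^Suc D) (Qv R L t) = radd R (Qv R ?L t) (Qv R L (2*t))"
        using Suc.prems by (intro step_id) auto
      hence "rzero R = radd R (Qv R ?L t) (rzero R)" using Suc.prems by simp
      thus "Qv R ?L t = rzero R" using LpC by simp
    qed
    have deg: "\<forall>(d,e)\<in>set ?L. 1 \<le> d \<and> d \<le> D \<and> e \<in> rcar R"
      using Suc.prems unfolding Lp_def by auto
    have "zm R (NN D) (linL R ?L) = rzero R" using Suc.IH[OF deg q] .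
    moreover have "linL R ?L = zm R (2^Suc D - 2) (linL R L)"
      using Suc.prems False Lc by (intro linL_Lp) auto
    ultimately show ?thesis using False Lc by (simp add: NN_Suc zm_mult)
  qed
qed


lemma Qv_neg: "snd ` set L \<subseteq> rcar R \<Longrightarrow>
   Qv R (map (\<lambda>(d,e). (d, rneg R e)) L) t = rneg R (Qv R L t)"
  by (induction L) (auto simp: Qv_Cons zm_neg neg_distrib)

lemma linL_neg: "snd ` set L \<subseteq> rcar R \<Longrightarrow>
   linL R (map (\<lambda>(d,e). (d, rneg R e)) L) = rneg R (linL R L)"
  unfolding linL_def by (induction L) (auto simp: neg_distrib)

definition mulL :: "(nat \<times> 'a) list \<Rightarrow> (nat \<times> 'a) list \<Rightarrow> (nat \<times> 'a) list" where
  "mulL L1 L2 = concat (map (\<lambda>(d1,e1). map (\<lambda>(d2,e2). (d1+d2, rmul R e1 e2)) L2) L1)"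

lemma Qv_inner: "e1 \<in> rcar R \<Longrightarrow> snd ` set L2 \<subseteq> rcar R \<Longrightarrow>
  Qv R (map (\<lambda>(d2,e2). (d1+d2, rmul R e1 e2)) L2) t = rmul R (zm R (t^d1) e1) (Qv R L2 t)"
proof (induction L2)
  case Nil thus ?case by simp
next
  case (Cons x L2)
  obtain d2 e2 where x: "x = (d2,e2)" by (cases x)
  have e2: "e2 \<in> rcar R" using Cons.prems x by auto
  have "zm R (t^(d1+d2)) (rmul R e1 e2) = rmul R (zm R (t^d1) e1) (zm R (t^d2) e2)"
    using e2 Cons.prems by (simp add: zm_mul_l zm_mul_r power_add mult.commute flip: zm_mult)
  thus ?case using Cons e2 x by (simp add: Qv_Cons distl)
qed

lemma lsum_mul_r: "set (map g L) \<subseteq> rcar R \<Longrightarrow> Y \<in> rcar R \<Longrightarrow>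
   lsum R (map (\<lambda>x. rmul R (g x) Y) L) = rmul R (lsum R (map g L)) Y"
  by (induction L) (auto simp: distr)

lemma Qv_mulL: "snd ` set L1 \<subseteq> rcar R \<Longrightarrow> snd ` set L2 \<subseteq> rcar R \<Longrightarrow>
   Qv R (mulL L1 L2) t = rmul R (Qv R L1 t) (Qv R L2 t)"
proof (induction L1)
  case Nil thus ?case by (simp add: mulL_def)
next
  case (Cons x L1)
  obtain d1 e1 where x: "x = (d1,e1)" by (cases x)
  have e1: "e1 \<in> rcar R" using Cons.prems x by auto
  have mc: "snd ` set (mulL L1 L2) \<subseteq> rcar R" using Cons.prems unfolding mulL_def
    by (force intro!: mul_cl)
  have ic: "snd ` set (map (\<lambda>(d2,e2). (d1+d2, rmul R e1 e2)) L2) \<subseteq> rcar R" using Cons.prems e1 by auto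
  have "mulL (x#L1) L2 = map (\<lambda>(d2,e2). (d1+d2, rmul R e1 e2)) L2 @ mulL L1 L2"
    by (simp add: mulL_def x)
  hence "Qv R (mulL (x#L1) L2) t = radd R (rmul R (zm R (t^d1) e1) (Qv R L2 t)) (rmul R (Qv R L1 t) (Qv R L2 t))"
    using Qv_append[OF ic mc] Qv_inner[OF e1 Cons.prems(2)] Cons by simp
  thus ?case using Cons.prems e1 by (simp add: x Qv_Cons distr)
qed

lemma linL_mulL: "\<forall>(d,e)\<in>set L1. 1 \<le> d \<Longrightarrow> \<forall>(d,e)\<in>set L2. 1 \<le> d \<Longrightarrow> linL R (mulL L1 L2) = rzero R"
proof -
  assume a: "\<forall>(d,e)\<in>set L1. 1 \<le> d" "\<forall>(d,e)\<in>set L2. 1 \<le> d"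
  have "filter (\<lambda>(d,e). d = 1) (mulL L1 L2) = []"
    using a unfolding mulL_def by (fastforce simp: filter_empty_conv)
  thus ?thesis by (simp add: linL_def)
qed

end

primrec dg :: "rterm \<Rightarrow> nat" where
  "dg (Var j) = 1" | "dg Zero = 1" | "dg (Add s t) = max (dg s) (dg t)"
| "dg (Neg s) = dg s" | "dg (Mul s t) = dg s + dg t"

primrec lpq :: "nat \<Rightarrow> rterm \<Rightarrow> nat \<times> nat" where
  "lpq i (Var j) = (if i = j then (1,0) else (0,0))"
| "lpq i Zero = (0,0)"
| "lpq i (Add s t) = (fst (lpq i s) + fst (lpq i t), snd (lpq i s) + snd (lpq i t))"
| "lpq i (Neg s) = (snd (lpq i s), fst (lpq i s))"
| "lpq i (Mul s t) = (0,0)"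

context rg0 begin

lemma expand:
  assumes a: "a \<in> rcar R"
  shows "\<exists>L. (\<forall>(d,e)\<in>set L. 1 \<le> d \<and> d \<le> dg p \<and> e \<in> rcar R) \<and>
     (\<forall>t. eval R (\<lambda>j. if j = i then zm R t a else rzero R) p = Qv R L t) \<and>
     linL R L = radd R (zm R (fst (lpq i p)) a) (rneg R (zm R (snd (lpq i p)) a))"
proof (induction p)
  case (Var j)
  show ?case
  proof (cases "j = i")
    case True
    show ?thesis using a True
      by (intro exI[of _ "[(1,a)]"]) (simp add: Qv_Cons linL_def)
  next
    case False
    show ?thesis using a False
      by (intro exI[of _ "[]"]) (auto simp: linL_def)
  qed
next
  case Zero
  show ?case using a by (intro exI[of _ "[]"]) (auto simp: linL_def)
next
  case (Add s u)
  obtain L1 where L1: "\<forall>(d,e)\<in>set L1. 1 \<le> d \<and> d \<le> dg s \<and> e \<in> rcar R"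
    "\<forall>t. eval R (\<lambda>j. if j = i then zm R t a else rzero R) s = Qv R L1 t"
    "linL R L1 = radd R (zm R (fst (lpq i s)) a) (rneg R (zm R (snd (lpq i s)) a))"
    using Add.IH(1) by blast
  obtain L2 where L2: "\<forall>(d,e)\<in>set L2. 1 \<le> d \<and> d \<le> dg u \<and> e \<in> rcar R"
    "\<forall>t. eval R (\<lambda>j. if j = i then zm R t a else rzero R) u = Qv R L2 t"
    "linL R L2 = radd R (zm R (fst (lpq i u)) a) (rneg R (zm R (snd (lpq i u)) a))"
    using Add.IH(2) by blast
  have c1: "snd ` set L1 \<subseteq> rcar R" and c2: "snd ` set L2 \<subseteq> rcar R" using L1(1) L2(1) by auto
  show ?case
  proof (intro exI[of _ "L1 @ L2"] conjI allI)
    show "\<forall>(d,e)\<in>set (L1@L2). 1 \<le> d \<and> d \<le> dg (Add s u) \<and> e \<in> rcar R"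
      using L1(1) L2(1) by fastforce
    fix t show "eval R (\<lambda>j. if j = i then zm R t a else rzero R) (Add s u) = Qv R (L1 @ L2) t"
      using L1(2) L2(2) by (simp add: Qv_append[OF c1 c2])
  next
    show "linL R (L1 @ L2) = radd R (zm R (fst (lpq i (Add s u))) a) (rneg R (zm R (snd (lpq i (Add s u))) a))"
      using a by (simp add: linL_append[OF c1 c2] L1(3) L2(3) zm_add neg_distrib ac4)
  qed
next
  case (Neg s)
  obtain L1 where L1: "\<forall>(d,e)\<in>set L1. 1 \<le> d \<and> d \<le> dg s \<and> e \<in> rcar R"
    "\<forall>t. eval R (\<lambda>j. if j = i then zm R t a else rzero R) s = Qv R L1 t"
    "linL R L1 = radd R (zm R (fst (lpq i s)) a) (rneg R (zm R (snd (lpq i s)) a))"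
    using Neg.IH(1) by blast
  have c1: "snd ` set L1 \<subseteq> rcar R" using L1(1) by auto
  show ?case
  proof (intro exI[of _ "map (\<lambda>(d,e). (d, rneg R e)) L1"] conjI allI)
    show "\<forall>(d,e)\<in>set (map (\<lambda>(d,e). (d, rneg R e)) L1). 1 \<le> d \<and> d \<le> dg (Neg s) \<and> e \<in> rcar R"
      using L1(1) by fastforce
    fix t show "eval R (\<lambda>j. if j = i then zm R t a else rzero R) (Neg s) = Qv R (map (\<lambda>(d,e). (d, rneg R e)) L1) t"
      using L1(2) by (simp add: Qv_neg[OF c1])
  next
    show "linL R (map (\<lambda>(d,e). (d, rneg R e)) L1) = radd R (zm R (fst (lpq i (Neg s))) a) (rneg R (zm R (snd (lpq i (Neg s))) a))"
      using a by (simp add: linL_neg[OF c1] L1(3) neg_distrib add_comm)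
  qed
next
  case (Mul s u)
  obtain L1 where L1: "\<forall>(d,e)\<in>set L1. 1 \<le> d \<and> d \<le> dg s \<and> e \<in> rcar R"
    "\<forall>t. eval R (\<lambda>j. if j = i then zm R t a else rzero R) s = Qv R L1 t"
    using Mul.IH(1) by blast
  obtain L2 where L2: "\<forall>(d,e)\<in>set L2. 1 \<le> d \<and> d \<le> dg u \<and> e \<in> rcar R"
    "\<forall>t. eval R (\<lambda>j. if j = i then zm R t a else rzero R) u = Qv R L2 t"
    using Mul.IH(2) by blast
  have c1: "snd ` set L1 \<subseteq> rcar R" and c2: "snd ` set L2 \<subseteq> rcar R" using L1(1) L2(1) by auto
  show ?case
  proof (intro exI[of _ "mulL L1 L2"] conjI allI)
    show "\<forall>(d,e)\<in>set (mulL L1 L2). 1 \<le> d \<and> d \<le> dg (Mul s u) \<and> e \<in> rcar R"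
      using L1(1) L2(1) unfolding mulL_def by fastforce
    fix t show "eval R (\<lambda>j. if j = i then zm R t a else rzero R) (Mul s u) = Qv R (mulL L1 L2) t"
      using L1(2) L2(2) by (simp add: Qv_mulL[OF c1 c2])
  next
    show "linL R (mulL L1 L2) = radd R (zm R (fst (lpq i (Mul s u))) a) (rneg R (zm R (snd (lpq i (Mul s u))) a))"
    proof -
      have "\<forall>(d,e)\<in>set L1. 1 \<le> d" "\<forall>(d,e)\<in>set L2. 1 \<le> d" using L1(1) L2(1) by auto
      thus ?thesis using linL_mulL by simp
    qed
  qed
qed

end

context rg0 begin

lemma eval_cl: "\<forall>i. \<rho> i \<in> rcar R \<Longrightarrow> eval R \<rho> p \<in> rcar R"
  by (induction p) auto

lemma lin_bound:
  assumes sat: "satisfies R p" and a: "a \<in> rcar R"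
  shows "zm R (NN (dg p) * ((fst (lpq i p) - snd (lpq i p)) + (snd (lpq i p) - fst (lpq i p)))) a = rzero R"
proof -
  obtain L where L: "\<forall>(d,e)\<in>set L. 1 \<le> d \<and> d \<le> dg p \<and> e \<in> rcar R"
     "\<forall>t. eval R (\<lambda>j. if j = i then zm R t a else rzero R) p = Qv R L t"
     "linL R L = radd R (zm R (fst (lpq i p)) a) (rneg R (zm R (snd (lpq i p)) a))"
    using expand[OF a] by blast
  have "\<forall>t. Qv R L t = rzero R"
  proof
    fix t
    have "eval R (\<lambda>j. if j = i then zm R t a else rzero R) p = rzero R"
      using sat a unfolding satisfies_def by auto
    thus "Qv R L t = rzero R" using L(2) by simp
  qed
  from elim[OF L(1) this] L(3)
  have e: "zm R (NN (dg p)) (radd R (zm R (fst (lpq i p)) a) (rneg R (zm R (snd (lpq i p)) a))) = rzero R"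
    by simp
  define N where "N = NN (dg p)"
  define P where "P = fst (lpq i p)"
  define Q where "Q = snd (lpq i p)"
  have "radd R (zm R (N*P) a) (rneg R (zm R (N*Q) a)) = rzero R"
    using e a by (simp add: N_def P_def Q_def zm_distrib zm_neg zm_mult)
  hence eq: "zm R (N*P) a = zm R (N*Q) a"
    using a by (metis neg_unique neg_neg neg_cl zm_cl)
  show ?thesis
  proof (cases "P \<le> Q")
    case True
    hence "N*Q = N*P + N*(Q-P)" by (simp add: algebra_simps)
    hence "zm R (N*Q) a = radd R (zm R (N*P) a) (zm R (N*(Q-P)) a)" using a by (simp add: zm_add)
    hence "zm R (N*(Q-P)) a = rzero R" using eq a by (metis zero_unique zm_cl)
    thus ?thesis using True by (simp add: N_def P_def Q_def)
  next
    case False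
    hence "N*P = N*Q + N*(P-Q)" by (simp add: algebra_simps)
    hence "zm R (N*P) a = radd R (zm R (N*Q) a) (zm R (N*(P-Q)) a)" using a by (simp add: zm_add)
    hence "zm R (N*(P-Q)) a = rzero R" using eq a by (metis zero_unique zm_cl)
    thus ?thesis using False by (simp add: N_def P_def Q_def)
  qed
qed

end

definition zr :: "nat \<Rightarrow> nat rg" where
  "zr n = \<lparr>rcar = {..<n}, radd = (\<lambda>x y. (x+y) mod n), rmul = (\<lambda>x y. 0),
           rneg = (\<lambda>x. (n - x) mod n), rzero = 0\<rparr>"

lemma zr_simps[simp]: "rcar (zr n) = {..<n}" "radd (zr n) x y = (x+y) mod n" "rmul (zr n) x y = 0"
  "rneg (zr n) x = (n - x) mod n" "rzero (zr n) = 0"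
  by (simp_all add: zr_def)

lemma zr_rng: "n \<ge> 1 \<Longrightarrow> is_rng (zr n)"
  unfolding is_rng_def
  by (auto simp: mod_add_left_eq mod_add_right_eq add_ac)

primrec vs :: "rterm \<Rightarrow> nat set" where
  "vs (Var j) = {j}" | "vs Zero = {}" | "vs (Add s t) = vs s \<union> vs t"
| "vs (Neg s) = vs s" | "vs (Mul s t) = vs s \<union> vs t"

lemma finite_vs[simp]: "finite (vs p)" by (induction p) auto

lemma zr_eval_lt: "n \<ge> 1 \<Longrightarrow> \<forall>i. \<rho> i < n \<Longrightarrow> eval (zr n) \<rho> p < n"
  by (induction p) auto

lemma int_mod_eq: "int (x mod n) = int x - int n * int (x div n)"
proof -
  have "x = n * (x div n) + x mod n" by simp
  hence "int x = int (n * (x div n)) + int (x mod n)" by (metis of_nat_add)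
  thus ?thesis by simp
qed

lemma zr_eval_dvd:
  assumes n: "n \<ge> 1" and r: "\<forall>i. \<rho> i < n" and A: "finite A" "vs p \<subseteq> A"
  shows "int n dvd (int (eval (zr n) \<rho> p) + (\<Sum>i\<in>A. int (snd (lpq i p)) * int (\<rho> i))
                    - (\<Sum>i\<in>A. int (fst (lpq i p)) * int (\<rho> i)))"
  using A
proof (induction p)
  case (Var j)
  hence j: "j \<in> A" by simp
  have "(\<Sum>i\<in>A. int (fst (lpq i (Var j))) * int (\<rho> i)) = (\<Sum>i\<in>A. if i = j then int (\<rho> j) else 0)"
    by (rule sum.cong) auto
  also have "\<dots> = int (\<rho> j)" using j Var.prems by simp
  finally have 1: "(\<Sum>i\<in>A. int (fst (lpq i (Var j))) * int (\<rho> i)) = int (\<rho> j)" .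
  have 2: "(\<Sum>i\<in>A. int (snd (lpq i (Var j))) * int (\<rho> i)) = 0"
    by (rule sum.neutral) auto
  show ?case by (simp only: 1 2) simp
next
  case Zero thus ?case by simp
next
  case (Add s u)
  let ?e1 = "eval (zr n) \<rho> s" and ?e2 = "eval (zr n) \<rho> u"
  let ?X1 = "int ?e1 + (\<Sum>i\<in>A. int (snd (lpq i s)) * int (\<rho> i)) - (\<Sum>i\<in>A. int (fst (lpq i s)) * int (\<rho> i))"
  let ?X2 = "int ?e2 + (\<Sum>i\<in>A. int (snd (lpq i u)) * int (\<rho> i)) - (\<Sum>i\<in>A. int (fst (lpq i u)) * int (\<rho> i))"
  have d1: "int n dvd ?X1" using Add by simp
  have d2: "int n dvd ?X2" using Add by simp
  have eq: "int (eval (zr n) \<rho> (Add s u)) + (\<Sum>i\<in>A. int (snd (lpq i (Add s u))) * int (\<rho> i))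
                    - (\<Sum>i\<in>A. int (fst (lpq i (Add s u))) * int (\<rho> i)) = ?X1 + ?X2 - int n * int ((?e1 + ?e2) div n)"
    by (simp add: sum.distrib int_mod_eq algebra_simps)
  show ?case unfolding eq by (intro dvd_diff dvd_add d1 d2) simp
next
  case (Neg s)
  let ?e = "eval (zr n) \<rho> s"
  have lt: "?e < n" using zr_eval_lt n r by blast
  let ?X = "int ?e + (\<Sum>i\<in>A. int (snd (lpq i s)) * int (\<rho> i)) - (\<Sum>i\<in>A. int (fst (lpq i s)) * int (\<rho> i))"
  have h: "int n dvd ?X" using Neg by simp
  have eq: "int (eval (zr n) \<rho> (Neg s)) + (\<Sum>i\<in>A. int (snd (lpq i (Neg s))) * int (\<rho> i))
                    - (\<Sum>i\<in>A. int (fst (lpq i (Neg s))) * int (\<rho> i)) = int n - ?X - int n * int ((n - ?e) div n)"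
    using lt by (simp add: int_mod_eq of_nat_diff algebra_simps)
  show ?case unfolding eq by (intro dvd_diff h) simp_all
next
  case (Mul s u) thus ?case by simp
qed


definition prg :: "nat rg \<Rightarrow> nat rg \<Rightarrow> nat rg" where
  "prg R S = \<lparr>rcar = prod_encode ` (rcar R \<times> rcar S),
     radd = (\<lambda>x y. prod_encode (radd R (fst (prod_decode x)) (fst (prod_decode y)),
                                 radd S (snd (prod_decode x)) (snd (prod_decode y)))),
     rmul = (\<lambda>x y. prod_encode (rmul R (fst (prod_decode x)) (fst (prod_decode y)),
                                 rmul S (snd (prod_decode x)) (snd (prod_decode y)))),
     rneg = (\<lambda>x. prod_encode (rneg R (fst (prod_decode x)), rneg S (snd (prod_decode x)))),
     rzero = prod_encode (rzero R, rzero S)\<rparr>"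

lemma prg_simps[simp]: "rcar (prg R S) = prod_encode ` (rcar R \<times> rcar S)"
  "radd (prg R S) x y = prod_encode (radd R (fst (prod_decode x)) (fst (prod_decode y)),
                                 radd S (snd (prod_decode x)) (snd (prod_decode y)))"
  "rmul (prg R S) x y = prod_encode (rmul R (fst (prod_decode x)) (fst (prod_decode y)),
                                 rmul S (snd (prod_decode x)) (snd (prod_decode y)))"
  "rneg (prg R S) x = prod_encode (rneg R (fst (prod_decode x)), rneg S (snd (prod_decode x)))"
  "rzero (prg R S) = prod_encode (rzero R, rzero S)"
  by (simp_all add: prg_def)

lemma prg_rng: assumes "is_rng R" "is_rng S" shows "is_rng (prg R S)"
proof -
  interpret r: rg0 R by (unfold_locales) fact
  interpret s: rg0 S by (unfold_locales) fact
  show ?thesis unfolding is_rng_def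
    by (auto simp: r.add_assoc s.add_assoc r.mul_assoc s.mul_assoc r.distl s.distl r.distr s.distr
      intro: r.add_comm s.add_comm)
qed

lemma eval_prg: "eval (prg R S) \<rho> p = prod_encode (eval R (\<lambda>i. fst (prod_decode (\<rho> i))) p,
                                                  eval S (\<lambda>i. snd (prod_decode (\<rho> i))) p)"
  by (induction p) auto

lemma sat_prg: "satisfies R p \<Longrightarrow> satisfies S p \<Longrightarrow> satisfies (prg R S) p"
  unfolding satisfies_def
proof (intro allI impI)
  fix \<rho> :: "nat \<Rightarrow> nat"
  assume a: "\<forall>\<rho>. (\<forall>i. \<rho> i \<in> rcar R) \<longrightarrow> eval R \<rho> p = rzero R"
     "\<forall>\<rho>. (\<forall>i. \<rho> i \<in> rcar S) \<longrightarrow> eval S \<rho> p = rzero S"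
     "\<forall>i. \<rho> i \<in> rcar (prg R S)"
  have "\<forall>i. fst (prod_decode (\<rho> i)) \<in> rcar R \<and> snd (prod_decode (\<rho> i)) \<in> rcar S"
  proof
    fix i
    obtain u v where "u \<in> rcar R" "v \<in> rcar S" "\<rho> i = prod_encode (u,v)" using a(3) by force
    thus "fst (prod_decode (\<rho> i)) \<in> rcar R \<and> snd (prod_decode (\<rho> i)) \<in> rcar S" by simp
  qed
  thus "eval (prg R S) \<rho> p = rzero (prg R S)" using a(1,2) by (simp add: eval_prg)
qed

lemma sat_embed:
  fixes S :: "('a,'b) rg_scheme" and R :: "('c,'d) rg_scheme" and h :: "'a \<Rightarrow> 'c"
  assumes S: "is_rng S" and R: "is_rng R"
    and h: "\<forall>x\<in>rcar S. h x \<in> rcar R" "inj_on h (rcar S)"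
    "\<forall>x\<in>rcar S. \<forall>y\<in>rcar S. h (radd S x y) = radd R (h x) (h y) \<and> h (rmul S x y) = rmul R (h x) (h y)"
    "\<forall>x\<in>rcar S. h (rneg S x) = rneg R (h x)" "h (rzero S) = rzero R"
    and sat: "satisfies R p"
  shows "satisfies S p"
  unfolding satisfies_def
proof (intro allI impI)
  interpret s: rg0 S by unfold_locales fact
  fix \<rho> :: "nat \<Rightarrow> 'a" assume r: "\<forall>i. \<rho> i \<in> rcar S"
  have e: "eval R (\<lambda>i. h (\<rho> i)) q = h (eval S \<rho> q)" for q
    by (induction q) (use h r s.eval_cl in auto)
  have "eval R (\<lambda>i. h (\<rho> i)) p = rzero R" using sat h(1) r unfolding satisfies_def by auto
  hence "h (eval S \<rho> p) = h (rzero S)" using e h(5) by simp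
  thus "eval S \<rho> p = rzero S" using h(2) s.eval_cl[OF r] s.zero_cl by (meson inj_onD)
qed

context rg0 begin

lemma zm_mod: "x \<in> rcar R \<Longrightarrow> zm R n x = rzero R \<Longrightarrow> zm R k x = zm R (k mod n) x"
proof -
  assume x: "x \<in> rcar R" and n: "zm R n x = rzero R"
  have "zm R k x = zm R ((k div n) * n + k mod n) x" by simp
  also have "\<dots> = zm R (k mod n) x" using x n by (simp only: zm_add zm_mult) simp
  finally show ?thesis .
qed

lemma order_exact:
  assumes q: "prime q" and c: "c \<in> rcar R" and c2: "zm R (q^2) c = rzero R" and c1: "zm R q c \<noteq> rzero R"
  shows "zm R k c = rzero R \<longleftrightarrow> q^2 dvd k"
proof -
  define ord0 where "ord0 = (LEAST n. 0 < n \<and> zm R n c = rzero R)"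
  have ex: "0 < q^2 \<and> zm R (q^2) c = rzero R" using q c2 by (simp add: prime_gt_0_nat)
  have oo: "0 < ord0 \<and> zm R ord0 c = rzero R" unfolding ord0_def by (rule LeastI[of _ "q^2"]) (fact ex)
  have od: "zm R k c = rzero R \<longleftrightarrow> ord0 dvd k" for k
  proof
    assume z: "zm R k c = rzero R"
    have "zm R (k mod ord0) c = rzero R" using zm_mod[OF c] oo z by metis
    moreover have "k mod ord0 < ord0" using oo by simp
    ultimately have "\<not> (0 < k mod ord0)" using not_less_Least[of "k mod ord0" "\<lambda>n. 0 < n \<and> zm R n c = rzero R"]
      unfolding ord0_def[symmetric] by (metis (no_types, lifting))
    thus "ord0 dvd k" by (simp add: dvd_eq_mod_eq_0)
  next
    assume "ord0 dvd k"
    then obtain j where "k = ord0 * j" by blast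
    thus "zm R k c = rzero R" using oo c by (simp add: mult.commute zm_mult)
  qed
  have "ord0 dvd q^2" using od c2 by blast
  then obtain i where i: "i \<le> 2" "ord0 = q^i" using divides_primepow_nat[OF q] by blast
  have "i = 2"
  proof (rule ccontr)
    assume "i \<noteq> 2"
    hence "ord0 dvd q" using i by (cases i) (auto simp: numeral_2_eq_2 le_Suc_eq)
    thus False using od c1 by blast
  qed
  thus ?thesis using od i by simp
qed

lemma embed_zr:
  assumes d: "d \<in> rcar R" and n: "n \<ge> 1" and o: "\<forall>k. zm R k d = rzero R \<longleftrightarrow> n dvd k"
    and dd: "rmul R d d = rzero R" and sat: "satisfies R p"
  shows "satisfies (zr n) p"
proof (rule sat_embed[OF zr_rng[OF n] isr _ _ _ _ _ sat, where h = "\<lambda>k. zm R k d"])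
  have zn: "zm R n d = rzero R" using o by simp
  have md: "zm R k d = zm R (k mod n) d" for k using zm_mod[OF d zn] .
  show "\<forall>x\<in>rcar (zr n). zm R x d \<in> rcar R" using d by simp
  show "inj_on (\<lambda>k. zm R k d) (rcar (zr n))"
  proof (rule inj_onI)
    fix x y assume xy: "x \<in> rcar (zr n)" "y \<in> rcar (zr n)" "zm R x d = zm R y d"
    show "x = y"
    proof (rule ccontr)
      assume "x \<noteq> y"
      then consider "x < y" | "y < x" by linarith
      thus False
      proof cases
        case 1
        have "zm R y d = radd R (zm R x d) (zm R (y - x) d)" using 1 d by (simp flip: zm_add)
        hence "zm R (y-x) d = rzero R" using xy(3) d by (metis zero_unique zm_cl)
        hence "n dvd (y - x)" using o by blast
        thus False using 1 xy by (auto dest: dvd_imp_le)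
      next
        case 2
        have "zm R x d = radd R (zm R y d) (zm R (x - y) d)" using 2 d by (simp flip: zm_add)
        hence "zm R (x-y) d = rzero R" using xy(3) d by (metis zero_unique zm_cl)
        hence "n dvd (x - y)" using o by blast
        thus False using 2 xy by (auto dest: dvd_imp_le)
      qed
    qed
  qed
  show "\<forall>x\<in>rcar (zr n). \<forall>y\<in>rcar (zr n). zm R (radd (zr n) x y) d = radd R (zm R x d) (zm R y d) \<and>
          zm R (rmul (zr n) x y) d = rmul R (zm R x d) (zm R y d)"
    using d dd by (auto simp: md[of "x + y" for x y, symmetric] zm_add zm_mul_l zm_mul_r)
  show "\<forall>x\<in>rcar (zr n). zm R (rneg (zr n) x) d = rneg R (zm R x d)"
  proof
    fix x assume x: "x \<in> rcar (zr n)"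
    have "radd R (zm R x d) (zm R (n - x) d) = rzero R" using x d zn by (simp flip: zm_add)
    hence "zm R (n - x) d = rneg R (zm R x d)" using d by (intro neg_unique) auto
    thus "zm R (rneg (zr n) x) d = rneg R (zm R x d)" by (simp flip: md)
  qed
  show "zm R (rzero (zr n)) d = rzero R" by simp
qed

end


lemma zero_prod_vertices:
  assumes "is_rng R" "\<forall>x\<in>rcar R. \<forall>y\<in>rcar R. rmul R x y = rzero R"
  shows "zd_vertices R = rcar R - {rzero R}"
  using assms unfolding zd_vertices_def by auto

lemma zero_prod_graph_iso:
  assumes R: "is_rng R" "\<forall>x\<in>rcar R. \<forall>y\<in>rcar R. rmul R x y = rzero R" "finite (rcar R)"
      and S: "is_rng S" "\<forall>x\<in>rcar S. \<forall>y\<in>rcar S. rmul S x y = rzero S" "finite (rcar S)"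
      and c: "card (rcar R) = card (rcar S)"
  shows "zd_graph_iso R S"
proof -
  have vR: "zd_vertices R = rcar R - {rzero R}" using zero_prod_vertices R by blast
  have vS: "zd_vertices S = rcar S - {rzero S}" using zero_prod_vertices S by blast
  have zR: "rzero R \<in> rcar R" using R(1) unfolding is_rng_def by blast
  have zS: "rzero S \<in> rcar S" using S(1) unfolding is_rng_def by blast
  have "card (zd_vertices R) = card (zd_vertices S)" using vR vS c zR zS R(3) S(3) by simp
  then obtain f where f: "bij_betw f (zd_vertices R) (zd_vertices S)"
    using finite_same_card_bij R(3) S(3) vR vS by (metis finite_Diff)
  have "\<forall>x\<in>zd_vertices R. \<forall>y\<in>zd_vertices R. zd_adj R x y \<longleftrightarrow> zd_adj S (f x) (f y)"
  proof (intro ballI)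
    fix x y assume xy: "x \<in> zd_vertices R" "y \<in> zd_vertices R"
    have fxy: "f x \<in> zd_vertices S" "f y \<in> zd_vertices S" using f xy bij_betwE by blast+
    have "x = y \<longleftrightarrow> f x = f y" using f xy unfolding bij_betw_def inj_on_def by blast
    thus "zd_adj R x y \<longleftrightarrow> zd_adj S (f x) (f y)"
      unfolding zd_adj_def using xy fxy vR vS R(2) S(2) by auto
  qed
  thus ?thesis unfolding zd_graph_iso_def using f by blast
qed

lemma zm_zr: "zm (zr n) k x = (k * x) mod n"
  by (induction k) (auto simp: mod_add_right_eq)

lemma zm_prg: "zm (prg R S) k z = prod_encode (zm R k (fst (prod_decode z)), zm S k (snd (prod_decode z)))"
  by (induction k) auto

lemma hom_zm:
  assumes R: "is_rng R" and S: "is_rng S" and f: "\<forall>x\<in>rcar R. f x \<in> rcar S"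
    "\<forall>x\<in>rcar R. \<forall>y\<in>rcar R. f (radd R x y) = radd S (f x) (f y)" and x: "x \<in> rcar R"
  shows "f (zm R (Suc k) x) = zm S (Suc k) (f x)"
proof (induction k)
  interpret r: rg0 R by unfold_locales fact
  interpret s: rg0 S by unfold_locales fact
  case 0 show ?case using x f by simp
next
  interpret r: rg0 R by unfold_locales fact
  case (Suc k)
  have "f (zm R (Suc (Suc k)) x) = radd S (f x) (f (zm R (Suc k) x))"
    using f x by (simp del: zm.simps(2) add: zm.simps(2)[of R "Suc k"])
  thus ?case using Suc by simp
qed

lemma pe0[simp]: "prod_encode (0,0) = 0" by (simp add: prod_encode_def)

lemma not_iso:
  assumes q: "q \<ge> 2"
  shows "\<not> rng_iso (zr (q^2)) (prg (zr q) (zr q))"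
proof
  assume "rng_iso (zr (q^2)) (prg (zr q) (zr q))"
  then obtain f where f: "bij_betw f (rcar (zr (q^2))) (rcar (prg (zr q) (zr q)))"
    "\<forall>x\<in>rcar (zr (q^2)). \<forall>y\<in>rcar (zr (q^2)). f (radd (zr (q^2)) x y) = radd (prg (zr q) (zr q)) (f x) (f y)"
    unfolding rng_iso_def by blast
  have q1: "q^2 \<ge> 1" "q \<ge> 1" using q by simp_all
  have qq: "q < q^2" using q by (simp add: power2_eq_square)
  have R: "is_rng (zr (q^2))" using zr_rng q1 by blast
  have S: "is_rng (prg (zr q) (zr q))" using zr_rng q1 prg_rng by blast
  have fc: "\<forall>x\<in>rcar (zr (q^2)). f x \<in> rcar (prg (zr q) (zr q))" using f(1) bij_betwE by blast
  have one: "1 \<in> rcar (zr (q^2))" using q qq by simp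
  have kill: "zm (prg (zr q) (zr q)) k (f 1) = 0" if "q dvd k" for k
  proof -
    obtain u v where uv: "u < q" "v < q" "f 1 = prod_encode (u, v)" using fc one by force
    have "(k*u) mod q = 0" "(k*v) mod q = 0" using that by auto
    thus ?thesis using uv by (simp add: zm_prg zm_zr)
  qed
  have "f (zm (zr (q^2)) (Suc (q-1)) 1) = zm (prg (zr q) (zr q)) (Suc (q - 1)) (f 1)"
    by (rule hom_zm[OF R S fc f(2) one])
  hence e1: "f q = 0" using q qq kill[of q] by (simp add: zm_zr)
  have "f (zm (zr (q^2)) (Suc (q^2-1)) 1) = zm (prg (zr q) (zr q)) (Suc (q^2 - 1)) (f 1)"
    by (rule hom_zm[OF R S fc f(2) one])
  hence e2: "f 0 = 0" using q1 kill[of "q^2"] by (simp add: zm_zr)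
  have "q = 0" using f(1) e1 e2 qq unfolding bij_betw_def inj_on_def by auto
  thus False using q by simp
qed


lemma contra:
  assumes H: "\<forall>R\<in>variety \<Sigma>. \<forall>S\<in>variety \<Sigma>.
             finite (rcar R) \<longrightarrow> finite (rcar S) \<longrightarrow> zd_graph_iso R S \<longrightarrow> rng_iso R S"
    and q: "q \<ge> 2" and A: "zr (q^2) \<in> variety \<Sigma>" and B: "zr q \<in> variety \<Sigma>"
  shows False
proof -
  have q1: "q^2 \<ge> 1" "q \<ge> 1" using q by simp_all
  have P: "prg (zr q) (zr q) \<in> variety \<Sigma>"
    using B zr_rng[OF q1(2)] unfolding variety_def by (auto intro: prg_rng sat_prg)
  have c: "card (rcar (prg (zr q) (zr q))) = q^2"
    by (simp add: card_image[OF inj_prod_encode] card_cartesian_product power2_eq_square)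
  have "zd_graph_iso (zr (q^2)) (prg (zr q) (zr q))"
    by (rule zero_prod_graph_iso) (use zr_rng[OF q1(1)] zr_rng[OF q1(2)] prg_rng c in auto)
  hence "rng_iso (zr (q^2)) (prg (zr q) (zr q))" using H A P by simp
  thus False using not_iso[OF q] by blast
qed

theorem proposition7:
  fixes \<Sigma> :: "rterm set"
  assumes "\<forall>R\<in>variety \<Sigma>. \<forall>S\<in>variety \<Sigma>.
             finite (rcar R) \<longrightarrow> finite (rcar S) \<longrightarrow> zd_graph_iso R S \<longrightarrow> rng_iso R S"
  shows "\<exists>m::nat. m > 0 \<and> (\<forall>q\<in>prime_factors m. multiplicity q m \<le> 3) \<and>
           smul_term m (Var 0) \<in> T_ideal (variety \<Sigma>)"
proof -
  define G where "G m \<longleftrightarrow> (\<forall>R\<in>variety \<Sigma>. \<forall>a\<in>rcar R. zm R m a = rzero R)" for m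
  have isr: "R \<in> variety \<Sigma> \<Longrightarrow> rg0 R" for R unfolding variety_def by unfold_locales auto
  have sat: "R \<in> variety \<Sigma> \<Longrightarrow> p \<in> \<Sigma> \<Longrightarrow> satisfies R p" for R p unfolding variety_def by auto
  show ?thesis
  proof (cases "\<exists>m>0. G m")
    case True
    define m0 where "m0 = (LEAST m. 0 < m \<and> G m)"
    have m0: "0 < m0 \<and> G m0" unfolding m0_def using True by (metis (mono_tags, lifting) LeastI_ex)
    have T: "smul_term m0 (Var 0) \<in> T_ideal (variety \<Sigma>)"
      unfolding T_ideal_def satisfies_def using m0 by (auto simp: eval_smul G_def)
    have mult: "\<forall>q\<in>prime_factors m0. multiplicity q m0 \<le> 3"
    proof (rule ballI, rule ccontr)
      fix q assume qf: "q \<in> prime_factors m0" and nm: "\<not> multiplicity q m0 \<le> 3"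
      have qp: "prime q" using qf by (simp add: in_prime_factors_imp_prime)
      have q2: "q \<ge> 2" using qp prime_ge_2_nat by blast
      have "q^4 dvd m0" using nm by (intro multiplicity_dvd') simp
      then obtain w where w: "m0 = q^4 * w" by blast
      have lt: "q^3 * w < m0" "0 < q^3 * w" using m0 w q2 by (auto simp: power_Suc)
      have "\<not> G (q^3 * w)" using not_less_Least[OF lt(1)[unfolded m0_def]] lt(2) by blast
      then obtain R a where R: "R \<in> variety \<Sigma>" and a: "a \<in> rcar R" and na: "zm R (q^3 * w) a \<noteq> rzero R"
        unfolding G_def by blast
      interpret rg0 R using isr[OF R] .
      define c where "c = zm R (q^2 * w) a"
      have cc: "c \<in> rcar R" using a by (simp add: c_def)
      have c1: "zm R q c \<noteq> rzero R" using na a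
        by (simp add: c_def flip: zm_mult) (simp add: power_Suc power2_eq_square numeral_3_eq_3 mult.assoc)
      have c2: "zm R (q^2) c = rzero R" using m0 R a unfolding G_def
        by (simp add: c_def w power_Suc power2_eq_square numeral_3_eq_3 flip: zm_mult)
           (simp add: numeral_Bit0 power_Suc mult.assoc)
      have ccz: "rmul R c c = rzero R"
      proof -
        have "rmul R c c = zm R ((q^2*w) * (q^2*w)) (rmul R a a)"
          using a by (simp add: c_def zm_mul_l zm_mul_r zm_mult)
        also have "(q^2*w) * (q^2*w) = w * m0" by (simp add: w power2_eq_square numeral_Bit0 power_add)
        also have "zm R (w * m0) (rmul R a a) = rzero R" using m0 R a unfolding G_def by (simp add: zm_mult)
        finally show ?thesis .
      qed
      have oc: "\<forall>k. zm R k c = rzero R \<longleftrightarrow> q^2 dvd k" using order_exact[OF qp cc c2 c1] by blast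
      define d where "d = zm R q c"
      have dd: "d \<in> rcar R" using cc by (simp add: d_def)
      have od: "\<forall>k. zm R k d = rzero R \<longleftrightarrow> q dvd k"
      proof
        fix k
        have "zm R k d = zm R (k*q) c" using cc by (simp add: d_def zm_mult)
        moreover have "q^2 dvd k*q \<longleftrightarrow> q dvd k" using q2 by (simp add: power2_eq_square)
        ultimately show "zm R k d = rzero R \<longleftrightarrow> q dvd k" using oc by simp
      qed
      have ddz: "rmul R d d = rzero R" using cc ccz by (simp add: d_def zm_mul_l zm_mul_r)
      have A: "zr (q^2) \<in> variety \<Sigma>"
        unfolding variety_def using q2 zr_rng embed_zr[OF cc _ oc ccz] sat[OF R]
        by (auto simp: Suc_le_eq)
      have B: "zr q \<in> variety \<Sigma>"
        unfolding variety_def using q2 zr_rng embed_zr[OF dd _ od ddz] sat[OF R]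
        by auto
      show False using contra[OF assms q2 A B] .
    qed
    show ?thesis using m0 T mult by blast
  next
    case False
    have lin0: "\<forall>p\<in>\<Sigma>. \<forall>i. fst (lpq i p) = snd (lpq i p)"
    proof (intro ballI allI, rule ccontr)
      fix p i assume p: "p \<in> \<Sigma>" and ne: "fst (lpq i p) \<noteq> snd (lpq i p)"
      define m where "m = NN (dg p) * ((fst (lpq i p) - snd (lpq i p)) + (snd (lpq i p) - fst (lpq i p)))"
      have "m > 0" using ne NN_pos unfolding m_def by auto
      moreover have "G m" unfolding G_def m_def
      proof (intro ballI)
        fix R a assume R: "R \<in> variety \<Sigma>" and a: "a \<in> rcar R"
        interpret rg0 R using isr[OF R] .
        show "zm R (NN (dg p) * ((fst (lpq i p) - snd (lpq i p)) + (snd (lpq i p) - fst (lpq i p)))) a = rzero R"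
          using lin_bound[OF sat[OF R p] a] .
      qed
      ultimately show False using False by blast
    qed
    have zrM: "zr n \<in> variety \<Sigma>" if n: "n \<ge> 1" for n
      unfolding variety_def
    proof (intro CollectI conjI ballI)
      show "is_rng (zr n)" using zr_rng n .
      fix p assume p: "p \<in> \<Sigma>"
      show "satisfies (zr n) p" unfolding satisfies_def
      proof (intro allI impI)
        fix \<rho> :: "nat \<Rightarrow> nat" assume r: "\<forall>i. \<rho> i \<in> rcar (zr n)"
        hence r': "\<forall>i. \<rho> i < n" by simp
        have "int n dvd (int (eval (zr n) \<rho> p) + (\<Sum>i\<in>vs p. int (snd (lpq i p)) * int (\<rho> i))
                    - (\<Sum>i\<in>vs p. int (fst (lpq i p)) * int (\<rho> i)))"
          by (rule zr_eval_dvd[OF n r']) auto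
        moreover have "(\<Sum>i\<in>vs p. int (snd (lpq i p)) * int (\<rho> i)) = (\<Sum>i\<in>vs p. int (fst (lpq i p)) * int (\<rho> i))"
          using lin0 p by simp
        ultimately have "int n dvd int (eval (zr n) \<rho> p)" by simp
        moreover have "eval (zr n) \<rho> p < n" using zr_eval_lt[OF n r'] .
        ultimately show "eval (zr n) \<rho> p = rzero (zr n)"
          by (simp add: int_dvd_int_iff) (meson dvd_imp_le neq0_conv not_le)
      qed
    qed
    have "False" using contra[OF assms _ zrM zrM, of 2] by simp
    thus ?thesis ..
  qed
qed

end
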